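(* Let $C_{\mathbb S}>0$ and $\mathbb{S}^d=\{x\in\mathbb{R}^{d+1}:\langle x,x\rangle=C_{\mathbb S}^{-1}\}$. Let $p\in\mathbb{S}^d$, $w\in T_p\mathbb{S}^d=p^{\perp}$, and let $H_{p,w}=\{x\in\mathbb{S}^d:\langle w,x\rangle=0\}$. If $\langle w,w\rangle=C_{\mathbb S}$, then for all $x\in\mathbb{S}^d$, $$\min_{y\in H_{p,w}}d(x,y)=\frac{1}{\sqrt{C_{\mathbb S}}}\,\mathrm{asin}\,|\langle w,x\rangle|=\frac{1}{\sqrt{C_{\mathbb S}}}\,\big|g_{p_\circ}(w,\log_{p_\circ}(x))\big|,$$ where $p_\circ=C_{\mathbb S}^{-1/2}\|P_w^\perp x\|^{-1}P_w^\perp x\in H_{p,w}$ and $P_w^\perp x=x-\frac{\langle x,w\rangle}{\langle w,w\rangle}w$.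
   Context: $\langle\cdot,\cdot\rangle$ is the standard dot product and $\|\cdot\|$ the Euclidean norm. On $\mathbb{S}^d$ the Riemannian metric is $g_q(u,v)=\langle u,v\rangle$ for $u,v\in T_q\mathbb{S}^d=q^\perp$; the geodesic distance is $d(x,q)=\frac{1}{\sqrt{C_{\mathbb S}}}\mathrm{acos}(C_{\mathbb S}\langle x,q\rangle)$; the logarithmic map is $\log_q(x)=\frac{\theta}{\sin\theta}(x-q\cos\theta)$ with $\theta=\sqrt{C_{\mathbb S}}\,d(x,q)$. *)

theory Defs
  imports "HOL-Analysis.Analysis"
begin

definition sphS :: "real \<Rightarrow> (real ^ 'n) set" where
  "sphS C = {x. x \<bullet> x = inverse C}"

definition distS :: "real \<Rightarrow> real ^ 'n \<Rightarrow> real ^ 'n \<Rightarrow> real" where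
  "distS C x q = (1 / sqrt C) * arccos (C * (x \<bullet> q))"

definition logS :: "real \<Rightarrow> real ^ 'n \<Rightarrow> real ^ 'n \<Rightarrow> real ^ 'n" where
  "logS C q x = (let \<theta> = sqrt C * distS C x q in
     (\<theta> / sin \<theta>) *\<^sub>R (x - cos \<theta> *\<^sub>R q))"

definition gS :: "real ^ 'n \<Rightarrow> real ^ 'n \<Rightarrow> real ^ 'n \<Rightarrow> real" where
  "gS q u v = u \<bullet> v"

definition HS :: "real \<Rightarrow> real ^ 'n \<Rightarrow> real ^ 'n \<Rightarrow> (real ^ 'n) set" where
  "HS C p w = {x \<in> sphS C. w \<bullet> x = 0}"

definition Pperp :: "real ^ 'n \<Rightarrow> real ^ 'n \<Rightarrow> real ^ 'n" where
  "Pperp w x = x - ((x \<bullet> w) / (w \<bullet> w)) *\<^sub>R w"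

definition pcirc :: "real \<Rightarrow> real ^ 'n \<Rightarrow> real ^ 'n \<Rightarrow> real ^ 'n" where
  "pcirc C w x = (inverse (sqrt C) * inverse (norm (Pperp w x))) *\<^sub>R Pperp w x"

end

theory Submission
  imports Defs
begin

theorem proposition1:
  fixes C :: real and p w x :: "real ^ 'n"
  assumes "C > 0"
    and "p \<in> sphS C"
    and "w \<bullet> p = 0"
    and "w \<bullet> w = C"
    and "x \<in> sphS C"
  shows "(\<exists>y\<in>HS C p w. distS C x y = (1 / sqrt C) * arcsin \<bar>w \<bullet> x\<bar>)
       \<and> (\<forall>y\<in>HS C p w. (1 / sqrt C) * arcsin \<bar>w \<bullet> x\<bar> \<le> distS C x y)
       \<and> (Pperp w x \<noteq> 0 \<longrightarrow>
            pcirc C w x \<in> HS C p w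
          \<and> (1 / sqrt C) * arcsin \<bar>w \<bullet> x\<bar>
              = (1 / sqrt C) * \<bar>gS (pcirc C w x) w (logS C (pcirc C w x) x)\<bar>)"
proof -
  define s where "s = w \<bullet> x"
  define P where "P = Pperp w x"
  have C0: "C > 0" by fact
  have xx: "x \<bullet> x = 1 / C" using assms(5) by (simp add: sphS_def field_simps)
  have pp: "p \<bullet> p = 1 / C" using assms(2) by (simp add: sphS_def field_simps)
  have ww: "w \<bullet> w = C" by fact
  have Pdef: "P = x - (s / C) *\<^sub>R w"
    using ww by (simp add: P_def Pperp_def s_def inner_commute)
  have Pw: "w \<bullet> P = 0"
    using C0 ww by (simp add: Pdef inner_diff_right s_def)
  have PP: "P \<bullet> P = (1 - s^2) / C"
    using C0 by (simp add: Pdef inner_diff_left inner_diff_right xx ww s_def inner_commute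
        field_simps power2_eq_square)
  have nw: "norm w = sqrt C" using ww by (simp add: norm_eq_sqrt_inner)
  have nx: "norm x = sqrt (1 / C)" using xx by (simp add: norm_eq_sqrt_inner)
  have sabs: "\<bar>s\<bar> \<le> 1"
  proof -
    have "\<bar>s\<bar> \<le> norm w * norm x" unfolding s_def by (rule Cauchy_Schwarz_ineq2)
    also have "\<dots> = 1" using C0 by (simp add: nw nx real_sqrt_divide field_simps)
    finally show ?thesis .
  qed
  have s2: "s^2 \<le> 1" using sabs by (simp add: abs_square_le_1)
  have nP: "norm P = sqrt ((1 - s^2) / C)" using PP by (simp add: norm_eq_sqrt_inner)
  have sq: "sqrt (1 - s^2) = sqrt C * norm P"
    using C0 s2 by (simp add: nP real_sqrt_mult[symmetric])
  have key: "arccos (sqrt (1 - s^2)) = arcsin \<bar>s\<bar>"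
    using sabs arcsin_arccos_sqrt_pos[of "\<bar>s\<bar>"] by simp
  have xy: "x \<bullet> y = P \<bullet> y" if "w \<bullet> y = 0" for y
    using that by (simp add: Pdef inner_diff_left inner_commute[of w y])
  have lower: "(1 / sqrt C) * arcsin \<bar>s\<bar> \<le> distS C x y" if y: "y \<in> HS C p w" for y
  proof -
    have wy: "w \<bullet> y = 0" and yy: "y \<bullet> y = 1 / C" using y C0 by (auto simp: HS_def sphS_def field_simps)
    have ny: "norm y = sqrt (1 / C)" using yy by (simp add: norm_eq_sqrt_inner)
    have "\<bar>C * (x \<bullet> y)\<bar> = C * \<bar>P \<bullet> y\<bar>" using C0 xy[OF wy] by (simp add: abs_mult)
    also have "\<dots> \<le> C * (norm P * norm y)"
      using C0 Cauchy_Schwarz_ineq2[of P y] by (simp add: mult_left_mono)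
    also have "\<dots> = sqrt (1 - s^2)" using C0
      by (simp add: sq ny real_sqrt_divide field_simps)
    finally have b: "\<bar>C * (x \<bullet> y)\<bar> \<le> sqrt (1 - s^2)" .
    have s1: "sqrt (1 - s^2) \<le> 1" using s2 by simp
    have b2: "- 1 \<le> C * (x \<bullet> y)" "C * (x \<bullet> y) \<le> sqrt (1 - s^2)"
      using b s1 abs_le_iff[of "C * (x \<bullet> y)" "sqrt (1 - s^2)"] by linarith+
    have "arcsin \<bar>s\<bar> \<le> arccos (C * (x \<bullet> y))"
      unfolding key[symmetric] using b2 s1 by (intro arccos_le_arccos)
    then show ?thesis unfolding distS_def using C0 by (simp add: divide_right_mono)
  qed
  have pcdef: "pcirc C w x = (1 / (sqrt C * norm P)) *\<^sub>R P"
    by (simp add: pcirc_def P_def field_simps)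
  have pcfacts: "pcirc C w x \<in> HS C p w \<and> C * (x \<bullet> pcirc C w x) = sqrt (1 - s^2)" if P0: "P \<noteq> 0"
  proof -
    have nP0: "norm P > 0" using P0 by simp
    have sC: "sqrt C > 0" using C0 by simp
    have "pcirc C w x \<bullet> pcirc C w x = (P \<bullet> P) / (C * (norm P)^2)"
      using C0 by (simp add: pcdef power2_eq_square)
    also have "\<dots> = 1 / C" using nP0 C0 by (simp add: power2_norm_eq_inner[symmetric])
    finally have a: "pcirc C w x \<bullet> pcirc C w x = inverse C" by (simp add: inverse_eq_divide)
    have b: "w \<bullet> pcirc C w x = 0" by (simp add: pcdef Pw)
    have "C * (x \<bullet> pcirc C w x) = C * (P \<bullet> P) / (sqrt C * norm P)"
    proof -
      have "x \<bullet> P = P \<bullet> P" using xy[of P] Pw by simp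
      then show ?thesis by (simp add: pcdef)
    qed
    also have "\<dots> = sqrt C * norm P"
      using nP0 sC C0 by (simp add: power2_norm_eq_inner[symmetric] field_simps power2_eq_square)
    finally show ?thesis using a b sq by (simp add: HS_def sphS_def)
  qed
  have part3: "(1 / sqrt C) * arcsin \<bar>s\<bar>
              = (1 / sqrt C) * \<bar>gS (pcirc C w x) w (logS C (pcirc C w x) x)\<bar>" if P0: "P \<noteq> 0"
  proof -
    define q where "q = pcirc C w x"
    have hq: "q \<in> HS C p w" and cq: "C * (x \<bullet> q) = sqrt (1 - s^2)" using pcfacts[OF P0] by (auto simp: q_def)
    have wq: "w \<bullet> q = 0" using hq by (simp add: HS_def)
    have th: "sqrt C * distS C x q = arcsin \<bar>s\<bar>" using C0 by (simp add: distS_def cq key)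
    have sn: "sin (arcsin \<bar>s\<bar>) = \<bar>s\<bar>" using sabs by simp
    have L: "logS C q x = (arcsin \<bar>s\<bar> / \<bar>s\<bar>) *\<^sub>R (x - cos (arcsin \<bar>s\<bar>) *\<^sub>R q)"
      unfolding logS_def Let_def th sn by (rule refl)
    have "gS q w (logS C q x) = (arcsin \<bar>s\<bar> / \<bar>s\<bar>) * s"
      unfolding L gS_def inner_scaleR_right inner_diff_right wq s_def by simp
    moreover have "\<bar>(arcsin \<bar>s\<bar> / \<bar>s\<bar>) * s\<bar> = arcsin \<bar>s\<bar>"
    proof (cases "s = 0")
      case True then show ?thesis by simp
    next
      case False
      have "arcsin \<bar>s\<bar> \<ge> 0" using sabs by (intro arcsin_nonneg) auto
      then show ?thesis using False by (simp add: abs_mult)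
    qed
    ultimately show ?thesis by (simp add: q_def)
  qed
  have exist: "\<exists>y\<in>HS C p w. distS C x y = (1 / sqrt C) * arcsin \<bar>s\<bar>"
  proof (cases "P = 0")
    case False
    then show ?thesis using pcfacts[OF False] key
      by (intro bexI[of _ "pcirc C w x"]) (auto simp: distS_def)
  next
    case True
    have "P \<bullet> P = 0" using True by simp
    then have "s^2 = 1" using PP C0 by simp
    then have "\<bar>s\<bar> = 1" using power2_eq_1_iff[of s] by auto
    moreover have "x \<bullet> p = 0" using xy[of p] assms(3) True by simp
    moreover have "p \<in> HS C p w" using assms(2,3) by (simp add: HS_def)
    ultimately show ?thesis by (intro bexI[of _ p]) (auto simp: distS_def)
  qed
  show ?thesis using exist lower part3 pcfacts unfolding s_def P_def by blast
qed

end
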